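(* Let $\mathcal{S}_n(2413,3142)$ denote the set of permutations of $\{1,\dots,n\}$ (in one-line notation) avoiding both patterns $2413$ and $3142$, and let $S(x)=\sum_{n\ge 0}\lvert\mathcal{S}_n(2413,3142)\rvert x^n$, with the convention that the $n=0$ coefficient is $1$. For $1\le \ell\le n$ let $\mathcal{S}_n^{\ell\mapsto 1}(2413,3142)=\{\sigma\in \mathcal{S}_n(2413,3142):\sigma(\ell)=1\}$. Then the generating function \[ g(x,u)=\sum_{n=1}^\infty\sum_{\ell=1}^n \lvert\mathcal{S}_n^{\ell\mapsto 1}(2413,3142)\rvert\, u^{\ell}x^n \] satisfies \[ g(x,u)=\frac{xu\,S(x)S(xu)}{S(x)+S(xu)-S(x)S(xu)}. \]
   Context: A permutation $\sigma$ avoids a pattern $p$ if no subsequence of its one-line notation is order-isomorphic to $p$. Permutations avoiding $2413$ and $3142$ are called separable permutations. *)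

theory Defs
  imports "HOL-Computational_Algebra.Formal_Power_Series" "HOL-Combinatorics.Multiset_Permutations"
begin

definition contains_pattern :: "nat list \<Rightarrow> nat list \<Rightarrow> bool" where
  "contains_pattern xs p \<longleftrightarrow>
     (\<exists>js. length js = length p \<and> sorted_wrt (<) js \<and> (\<forall>j\<in>set js. j < length xs) \<and>
        (\<forall>a<length p. \<forall>b<length p. xs ! (js ! a) < xs ! (js ! b) \<longleftrightarrow> p ! a < p ! b))"

definition avoids :: "nat list \<Rightarrow> nat list \<Rightarrow> bool" where
  "avoids xs p \<longleftrightarrow> \<not> contains_pattern xs p"

definition sep_perms :: "nat \<Rightarrow> nat list set" where
  "sep_perms n = {xs \<in> permutations_of_set {1..n}. avoids xs [2,4,1,3] \<and> avoids xs [3,1,4,2]}"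

definition sep_perms_at :: "nat \<Rightarrow> nat \<Rightarrow> nat list set" where
  "sep_perms_at n l = {xs \<in> sep_perms n. xs ! (l - 1) = 1}"

text \<open>Bivariate series are elements of rat fps fps: outer variable x, inner variable u.\<close>

definition Sx :: "rat fps fps" where
  "Sx = Abs_fps (\<lambda>n. fps_const (if n = 0 then 1 else of_nat (card (sep_perms n))))"

definition Sxu :: "rat fps fps" where
  "Sxu = Abs_fps (\<lambda>n. fps_const (if n = 0 then 1 else of_nat (card (sep_perms n))) * fps_X ^ n)"

definition g_sep :: "rat fps fps" where
  "g_sep = Abs_fps (\<lambda>n. Abs_fps (\<lambda>l. if 1 \<le> l \<and> l \<le> n then of_nat (card (sep_perms_at n l)) else 0))"

end

theory Submission
  imports Defs
begin

unbundle fps_syntax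

lemma contains_len: "contains_pattern xs p \<Longrightarrow> length p \<le> length xs"
proof -
  assume "contains_pattern xs p"
  then obtain js where js: "length js = length p" "sorted_wrt (<) js" "\<forall>j\<in>set js. j < length xs"
    unfolding contains_pattern_def by blast
  have "distinct js" using js(2) strict_sorted_iff by blast
  hence "length js = card (set js)" by (simp add: distinct_card)
  also have "\<dots> \<le> card {..<length xs}" using js(3) by (intro card_mono) auto
  finally show ?thesis using js(1) by simp
qed

lemma contains_append_right: "contains_pattern xs p \<Longrightarrow> contains_pattern (xs @ ys) p"
proof -
  assume "contains_pattern xs p"
  then obtain js where js: "length js = length p" "sorted_wrt (<) js" "\<forall>j\<in>set js. j < length xs"
    "\<forall>a<length p. \<forall>b<length p. xs ! (js ! a) < xs ! (js ! b) \<longleftrightarrow> p ! a < p ! b"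
    unfolding contains_pattern_def by blast
  have "\<forall>j\<in>set js. j < length (xs @ ys)" using js(3) by auto
  moreover have "\<forall>a<length p. \<forall>b<length p. (xs@ys) ! (js ! a) < (xs@ys) ! (js ! b) \<longleftrightarrow> p ! a < p ! b"
    using js(1,3,4) by (simp add: nth_append)
  ultimately show ?thesis unfolding contains_pattern_def using js(1,2) by blast
qed

lemma contains_append_left: "contains_pattern ys p \<Longrightarrow> contains_pattern (xs @ ys) p"
proof -
  assume "contains_pattern ys p"
  then obtain js where js: "length js = length p" "sorted_wrt (<) js" "\<forall>j\<in>set js. j < length ys"
    "\<forall>a<length p. \<forall>b<length p. ys ! (js ! a) < ys ! (js ! b) \<longleftrightarrow> p ! a < p ! b"
    unfolding contains_pattern_def by blast
  let ?js = "map ((+) (length xs)) js"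
  have "sorted_wrt (<) ?js" using js(2) by (simp add: sorted_wrt_map)
  moreover have "\<forall>j\<in>set ?js. j < length (xs @ ys)" using js(3) by auto
  moreover have "\<forall>a<length p. \<forall>b<length p. (xs@ys) ! (?js ! a) < (xs@ys) ! (?js ! b) \<longleftrightarrow> p ! a < p ! b"
    using js(1,4) by (simp add: nth_append)
  ultimately show ?thesis unfolding contains_pattern_def using js(1) by (intro exI[of _ ?js]) simp
qed

lemma contains_map:
  assumes "\<And>a b. f a < f b \<longleftrightarrow> a < b"
  shows "contains_pattern (map f xs) p \<longleftrightarrow> contains_pattern xs p"
proof -
  have "(\<forall>a<length p. \<forall>b<length p. map f xs ! (js ! a) < map f xs ! (js ! b) \<longleftrightarrow> p ! a < p ! b) \<longleftrightarrow>
        (\<forall>a<length p. \<forall>b<length p. xs ! (js ! a) < xs ! (js ! b) \<longleftrightarrow> p ! a < p ! b)"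
    if "\<forall>j\<in>set js. j < length xs" "length js = length p" for js
    using that by (simp add: assms)
  thus ?thesis unfolding contains_pattern_def length_map by (intro iffI; elim exE; rule_tac x=js in exI; auto)
qed

lemma contains_insert: "contains_pattern (ys @ zs) p \<Longrightarrow> contains_pattern (ys @ x # zs) p"
proof -
  assume "contains_pattern (ys @ zs) p"
  then obtain js where js: "length js = length p" "sorted_wrt (<) js" "\<forall>j\<in>set js. j < length (ys @ zs)"
    "\<forall>a<length p. \<forall>b<length p. (ys @ zs) ! (js ! a) < (ys @ zs) ! (js ! b) \<longleftrightarrow> p ! a < p ! b"
    unfolding contains_pattern_def by blast
  define f where "f j = (if j < length ys then j else Suc j)" for j
  have val: "(ys @ x # zs) ! f j = (ys @ zs) ! j" if "j < length (ys @ zs)" for j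
    using that by (auto simp: f_def nth_append Suc_diff_le)
  let ?js = "map f js"
  have "sorted_wrt (<) ?js" using js(2) by (auto simp: sorted_wrt_map f_def elim!: sorted_wrt_mono_rel[rotated])
  moreover have "\<forall>j\<in>set ?js. j < length (ys @ x # zs)" using js(3) by (auto simp: f_def)
  moreover have "\<forall>a<length p. \<forall>b<length p. (ys @ x # zs) ! (?js ! a) < (ys @ x # zs) ! (?js ! b) \<longleftrightarrow> p ! a < p ! b"
    using js(1,3,4) val by (simp add: nth_map)
  ultimately show ?thesis unfolding contains_pattern_def using js(1) by (intro exI[of _ ?js]) simp
qed

lemma contains_split:
  assumes "contains_pattern (xs @ ys) p"
  shows "contains_pattern xs p \<or> contains_pattern ys p \<or>
    (\<exists>c. 0 < c \<and> c < length p \<and> (\<forall>a<c. \<forall>b. c \<le> b \<longrightarrow> b < length p \<longrightarrow>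
        (\<exists>x\<in>set xs. \<exists>y\<in>set ys. (x < y \<longleftrightarrow> p ! a < p ! b))))"
proof -
  obtain js where js: "length js = length p" "sorted_wrt (<) js" "\<forall>j\<in>set js. j < length (xs @ ys)"
    "\<forall>a<length p. \<forall>b<length p. (xs @ ys) ! (js ! a) < (xs @ ys) ! (js ! b) \<longleftrightarrow> p ! a < p ! b"
    using assms unfolding contains_pattern_def by blast
  let ?L = "length xs" and ?m = "length p"
  have srt: "js ! a < js ! b" if "a < b" "b < ?m" for a b
    using js(1,2) that by (simp add: sorted_wrt_iff_nth_less)
  have bnd: "js ! a < length (xs @ ys)" if "a < ?m" for a using js(1,3) that by auto
  show ?thesis
  proof (cases "\<forall>a<?m. js ! a < ?L")
    case True
    hence "contains_pattern xs p" unfolding contains_pattern_def using js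
      by (intro exI[of _ js]) (auto simp: nth_append in_set_conv_nth)
    thus ?thesis by blast
  next
    case F1: False
    show ?thesis
    proof (cases "\<forall>a<?m. ?L \<le> js ! a")
      case True
      let ?js = "map (\<lambda>j. j - ?L) js"
      have "sorted_wrt (<) ?js" using True srt js(1)
        by (auto simp: sorted_wrt_iff_nth_less) (metis diff_less_mono order.strict_trans)
      moreover have "\<forall>j\<in>set ?js. j < length ys"
      proof -
        { fix i assume i: "i < length p"
          have "js ! i - ?L < length ys" using True bnd[OF i] i by auto }
        thus ?thesis using js(1) by (auto simp: in_set_conv_nth)
      qed
      moreover have "\<forall>a<length p. \<forall>b<length p. ys ! (?js ! a) < ys ! (?js ! b) \<longleftrightarrow> p ! a < p ! b"
        using js(1,4) True by (auto simp: nth_append not_less[symmetric])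
      ultimately have "contains_pattern ys p" unfolding contains_pattern_def using js(1)
        by (intro exI[of _ ?js]) simp
      thus ?thesis by blast
    next
      case F2: False
      define c where "c = (LEAST a. a < ?m \<and> ?L \<le> js ! a)"
      have ex: "\<exists>a. a < ?m \<and> ?L \<le> js ! a" using F1 by auto
      have c1: "c < ?m" "?L \<le> js ! c" using LeastI_ex[OF ex] unfolding c_def by auto
      have c2: "js ! a < ?L" if "a < c" for a
        using not_less_Least[of a "\<lambda>a. a < ?m \<and> ?L \<le> js ! a"] that c1 unfolding c_def[symmetric] by auto
      have c3: "?L \<le> js ! b" if "c \<le> b" "b < ?m" for b
        using c1 srt[of c b] that by (cases "c = b") auto
      have c0: "0 < c"
      proof (rule ccontr)
        assume "\<not> 0 < c" hence "c = 0" by simp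
        thus False using F2 c3 by (auto simp: not_less)
      qed
      have "\<forall>a<c. \<forall>b. c \<le> b \<longrightarrow> b < ?m \<longrightarrow> (\<exists>x\<in>set xs. \<exists>y\<in>set ys. (x < y \<longleftrightarrow> p ! a < p ! b))"
      proof (intro allI impI)
        fix a b assume ab: "a < c" "c \<le> b" "b < ?m"
        have "(xs @ ys) ! (js ! a) = xs ! (js ! a)" using c2 ab by (simp add: nth_append)
        moreover have "(xs @ ys) ! (js ! b) = ys ! (js ! b - ?L)" using c3[OF ab(2,3)] by (simp add: nth_append)
        moreover have "xs ! (js ! a) \<in> set xs" using c2 ab by simp
        moreover have "ys ! (js ! b - ?L) \<in> set ys" using c3[OF ab(2,3)] bnd[OF ab(3)] by auto
        moreover have am: "a < ?m" using ab c1 by simp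
        moreover have "(xs@ys)!(js!a) < (xs@ys)!(js!b) \<longleftrightarrow> p!a<p!b" using js(4) am ab(3) by blast
        ultimately show "\<exists>x\<in>set xs. \<exists>y\<in>set ys. (x < y \<longleftrightarrow> p ! a < p ! b)"
          by metis
      qed
      thus ?thesis using c0 c1 by blast
    qed
  qed
qed

lemma avoid_sum:
  assumes "avoids xs p" "avoids ys p" "\<forall>x\<in>set xs. \<forall>y\<in>set ys. x < y"
    and "p = [2,4,1,3] \<or> p = [3,1,4,2]"
  shows "avoids (xs @ ys) p"
proof -
  { assume "contains_pattern (xs @ ys) p"
    from contains_split[OF this] assms(1,2) obtain c where c: "0 < c" "c < length p"
      "\<forall>a<c. \<forall>b. c \<le> b \<longrightarrow> b < length p \<longrightarrow> (\<exists>x\<in>set xs. \<exists>y\<in>set ys. (x < y \<longleftrightarrow> p ! a < p ! b))"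
      unfolding avoids_def by blast
    have H: "p ! a < p ! b" if "a < c" "c \<le> b" "b < length p" for a b
      using c(3) that assms(3) by blast
    have "c = 1 \<or> c = 2 \<or> c = 3" using c assms(4) by auto
    hence False
    proof (elim disjE)
      assume "c = 1" thus False using H[of 0 2] H[of 0 1] assms(4) by auto
    next
      assume "c = 2" thus False using H[of 0 2] H[of 0 3] assms(4) by auto
    next
      assume "c = 3" thus False using H[of 1 3] H[of 0 3] assms(4) by auto
    qed }
  thus ?thesis unfolding avoids_def by blast
qed

lemma avoid_skew:
  assumes "avoids xs p" "avoids ys p" "\<forall>x\<in>set xs. \<forall>y\<in>set ys. y < x"
    and "p = [2,4,1,3] \<or> p = [3,1,4,2]"
  shows "avoids (xs @ ys) p"
proof -
  { assume "contains_pattern (xs @ ys) p"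
    from contains_split[OF this] assms(1,2) obtain c where c: "0 < c" "c < length p"
      "\<forall>a<c. \<forall>b. c \<le> b \<longrightarrow> b < length p \<longrightarrow> (\<exists>x\<in>set xs. \<exists>y\<in>set ys. (x < y \<longleftrightarrow> p ! a < p ! b))"
      unfolding avoids_def by blast
    have H: "\<not> p ! a < p ! b" if H1: "a < c" "c \<le> b" "b < length p" for a b
    proof -
      obtain x y where xy: "x\<in>set xs" "y\<in>set ys" "(x<y) = (p!a<p!b)" using c(3) H1 by blast
      have "y < x" using assms(3) xy by blast
      thus ?thesis using xy by auto
    qed
    have "c = 1 \<or> c = 2 \<or> c = 3" using c assms(4) by auto
    hence False
    proof (elim disjE)
      assume "c = 1" thus False using H[of 0 2] H[of 0 1] assms(4) by auto
    next
      assume "c = 2" thus False using H[of 1 2] H[of 0 3] assms(4) by auto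
    next
      assume "c = 3" thus False using H[of 1 3] H[of 2 3] assms(4) by auto
    qed }
  thus ?thesis unfolding avoids_def by blast
qed

lemma all_less_4: "(\<forall>a<(4::nat). P a) \<longleftrightarrow> P 0 \<and> P 1 \<and> P 2 \<and> P 3"
  by (auto simp: less_Suc_eq numeral_eq_Suc)

lemma has_pat:
  assumes "i1 < i2" "i2 < i3" "i3 < i4" "i4 < length xs" "length p = 4"
    "\<forall>a<4. \<forall>b<4. xs ! ([i1,i2,i3,i4] ! a) < xs ! ([i1,i2,i3,i4] ! b) \<longleftrightarrow> p ! a < p ! b"
  shows "contains_pattern xs p"
  unfolding contains_pattern_def using assms
  by (intro exI[of _ "[i1,i2,i3,i4]"]) auto

lemma has2413:
  assumes "i1 < i2" "i2 < i3" "i3 < i4" "i4 < length xs"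
    "xs ! i3 < xs ! i1" "xs ! i1 < xs ! i4" "xs ! i4 < xs ! i2"
  shows "contains_pattern xs [2,4,1,3]"
  by (rule has_pat[OF assms(1-4)]) (use assms(5-7) in \<open>auto simp: all_less_4\<close>)

lemma has3142:
  assumes "i1 < i2" "i2 < i3" "i3 < i4" "i4 < length xs"
    "xs ! i2 < xs ! i4" "xs ! i4 < xs ! i1" "xs ! i1 < xs ! i3"
  shows "contains_pattern xs [3,1,4,2]"
  by (rule has_pat[OF assms(1-4)]) (use assms(5-7) in \<open>auto simp: all_less_4\<close>)

abbreviation "P2413 \<equiv> [2::nat,4,1,3]"
abbreviation "P3142 \<equiv> [3::nat,1,4,2]"

lemma sep_iff: "xs \<in> sep_perms n \<longleftrightarrow> distinct xs \<and> set xs = {1..n} \<and> avoids xs P2413 \<and> avoids xs P3142"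
  by (auto simp: sep_perms_def permutations_of_set_def)

lemma sep_len: "xs \<in> sep_perms n \<Longrightarrow> length xs = n"
  unfolding sep_iff by (metis card_atLeastAtMost diff_Suc_1 distinct_card)

lemma sep_finite: "finite (sep_perms n)"
proof -
  have "sep_perms n \<subseteq> {xs. set xs \<subseteq> {1..n} \<and> length xs = n}" using sep_len sep_iff by auto
  thus ?thesis by (rule finite_subset) (rule finite_lists_length_eq, simp)
qed

lemma img_minus: "k < a \<Longrightarrow> (\<lambda>v. v - k) ` {a..b} = {a-k..b-k::nat}"
proof
  assume "k < a"
  show "{a-k..b-k} \<subseteq> (\<lambda>v. v - k) ` {a..b}"
  proof
    fix y assume "y \<in> {a-k..b-k}"
    thus "y \<in> (\<lambda>v. v - k) ` {a..b}" using \<open>k < a\<close> by (intro image_eqI[of _ _ "y+k"]) auto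
  qed
qed auto

lemma img_plus: "(\<lambda>v. v + k) ` {a..b} = {a+k..b+k::nat}"
proof
  show "{a+k..b+k} \<subseteq> (\<lambda>v. v + k) ` {a..b}"
  proof
    fix y assume "y \<in> {a+k..b+k}"
    thus "y \<in> (\<lambda>v. v + k) ` {a..b}" by (intro image_eqI[of _ _ "y-k"]) auto
  qed
qed auto

lemma take_drop_disj: "distinct xs \<Longrightarrow> set (take k xs) \<inter> set (drop k xs) = {}"
  using distinct_append[of "take k xs" "drop k xs"] by simp

lemma take_drop_un: "set (take k xs) \<union> set (drop k xs) = set xs"
  using set_append[of "take k xs" "drop k xs"] by simp

lemma set_drop_diff: "distinct xs \<Longrightarrow> set (drop k xs) = set xs - set (take k xs)"
  using take_drop_disj[of xs k] take_drop_un[of k xs] by blast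

lemma set_take_diff: "distinct xs \<Longrightarrow> set (take k xs) = set xs - set (drop k xs)"
  using take_drop_disj[of xs k] take_drop_un[of k xs] by blast

lemma sum_perm:
  assumes a: "\<alpha> \<in> sep_perms i" and t: "\<tau> \<in> sep_perms j"
  shows "\<alpha> @ map (\<lambda>v. v + i) \<tau> \<in> sep_perms (i + j)"
proof -
  have s1: "set (map (\<lambda>v. v + i) \<tau>) = {1+i..j+i}" using t by (simp add: sep_iff img_plus)
  have "distinct (map (\<lambda>v. v + i) \<tau>)" using t by (simp add: sep_iff distinct_map inj_on_def)
  moreover have "set \<alpha> \<inter> set (map (\<lambda>v. v + i) \<tau>) = {}" using a s1 by (auto simp: sep_iff)
  moreover have "set (\<alpha> @ map (\<lambda>v. v + i) \<tau>) = {1..i+j}" using a s1 by (auto simp: sep_iff)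
  moreover have "avoids (\<alpha> @ map (\<lambda>v. v + i) \<tau>) p" if "p = P2413 \<or> p = P3142" for p
  proof (rule avoid_sum[OF _ _ _ that])
    show "avoids \<alpha> p" using a that by (auto simp: sep_iff)
    show "avoids (map (\<lambda>v. v + i) \<tau>) p" using t that by (auto simp: sep_iff avoids_def contains_map)
    show "\<forall>x\<in>set \<alpha>. \<forall>y\<in>set (map (\<lambda>v. v + i) \<tau>). x < y" using a s1 by (auto simp: sep_iff)
  qed
  ultimately show ?thesis using a by (auto simp: sep_iff)
qed

lemma skew_perm:
  assumes b: "\<beta> \<in> sep_perms m" and t: "\<tau> \<in> sep_perms j"
  shows "map (\<lambda>v. v + m) \<tau> @ \<beta> \<in> sep_perms (j + m)"
proof -
  have s1: "set (map (\<lambda>v. v + m) \<tau>) = {1+m..j+m}" using t by (simp add: sep_iff img_plus)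
  have "distinct (map (\<lambda>v. v + m) \<tau>)" using t by (simp add: sep_iff distinct_map inj_on_def)
  moreover have "set \<beta> \<inter> set (map (\<lambda>v. v + m) \<tau>) = {}" using b s1 by (auto simp: sep_iff)
  moreover have "set (map (\<lambda>v. v + m) \<tau> @ \<beta>) = {1..j+m}" using b s1 by (auto simp: sep_iff)
  moreover have "avoids (map (\<lambda>v. v + m) \<tau> @ \<beta>) p" if "p = P2413 \<or> p = P3142" for p
  proof (rule avoid_skew[OF _ _ _ that])
    show "avoids \<beta> p" using b that by (auto simp: sep_iff)
    show "avoids (map (\<lambda>v. v + m) \<tau>) p" using t that by (auto simp: sep_iff avoids_def contains_map)
    show "\<forall>x\<in>set (map (\<lambda>v. v + m) \<tau>). \<forall>y\<in>set \<beta>. y < x" using b s1 by (auto simp: sep_iff)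
  qed
  ultimately show ?thesis using b by (auto simp: sep_iff)
qed

lemma avoid_parts:
  assumes "avoids (xs @ ys) p"
  shows "avoids xs p" "avoids ys p"
  using assms contains_append_right contains_append_left unfolding avoids_def by blast+

lemma sum_split:
  assumes s: "\<sigma> \<in> sep_perms n" and k: "set (take k \<sigma>) = {1..k}" "k \<le> n"
  shows "take k \<sigma> \<in> sep_perms k" "map (\<lambda>v. v - k) (drop k \<sigma>) \<in> sep_perms (n - k)"
    "map (\<lambda>v. v + k) (map (\<lambda>v. v - k) (drop k \<sigma>)) = drop k \<sigma>"
proof -
  have d: "distinct \<sigma>" "set \<sigma> = {1..n}" using s by (auto simp: sep_iff)
  have sd: "set (drop k \<sigma>) = {k+1..n}" using set_drop_diff[OF d(1), of k] d(2) k by auto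
  have av: "avoids (take k \<sigma> @ drop k \<sigma>) p" if "p = P2413 \<or> p = P3142" for p
    using s that by (auto simp: sep_iff)
  have avt: "avoids (take k \<sigma>) p" if "p = P2413 \<or> p = P3142" for p
    using avoid_parts(1)[OF av[OF that]] .
  show "take k \<sigma> \<in> sep_perms k" using d k avt by (simp add: sep_iff)
  show m: "map (\<lambda>v. v + k) (map (\<lambda>v. v - k) (drop k \<sigma>)) = drop k \<sigma>"
    using sd by (auto intro!: map_idI)
  have "inj_on (\<lambda>v. v - k) (set (drop k \<sigma>))" using sd unfolding inj_on_def by auto
  hence "distinct (map (\<lambda>v. v - k) (drop k \<sigma>))"
    using d(1) by (simp add: distinct_map)
  moreover have "set (map (\<lambda>v. v - k) (drop k \<sigma>)) = {1..n-k}" using sd img_minus[of k "k+1" n] by (simp only: set_map) simp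
  moreover have "avoids (map (\<lambda>v. v - k) (drop k \<sigma>)) p" if "p = P2413 \<or> p = P3142" for p
  proof -
    have "avoids (drop k \<sigma>) p" using avoid_parts(2)[OF av[OF that]] .
    thus ?thesis using m contains_map[of "\<lambda>v. v + k" "map (\<lambda>v. v - k) (drop k \<sigma>)" p]
      unfolding avoids_def by simp
  qed
  ultimately show "map (\<lambda>v. v - k) (drop k \<sigma>) \<in> sep_perms (n - k)" by (simp add: sep_iff)
qed

lemma skew_split:
  assumes s: "\<sigma> \<in> sep_perms n" and k: "set (drop k \<sigma>) = {1..n-k}" "k \<le> n"
  shows "drop k \<sigma> \<in> sep_perms (n - k)" "map (\<lambda>v. v - (n-k)) (take k \<sigma>) \<in> sep_perms k"
    "map (\<lambda>v. v + (n-k)) (map (\<lambda>v. v - (n-k)) (take k \<sigma>)) = take k \<sigma>"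
proof -
  have d: "distinct \<sigma>" "set \<sigma> = {1..n}" using s by (auto simp: sep_iff)
  have sd: "set (take k \<sigma>) = {n-k+1..n}" using set_take_diff[OF d(1), of k] d(2) k by auto
  have av: "avoids (take k \<sigma> @ drop k \<sigma>) p" if "p = P2413 \<or> p = P3142" for p
    using s that by (auto simp: sep_iff)
  have avt: "avoids (drop k \<sigma>) p" if "p = P2413 \<or> p = P3142" for p
    using avoid_parts(2)[OF av[OF that]] .
  show "drop k \<sigma> \<in> sep_perms (n - k)" using d k avt by (simp add: sep_iff)
  show m: "map (\<lambda>v. v + (n-k)) (map (\<lambda>v. v - (n-k)) (take k \<sigma>)) = take k \<sigma>"
    using sd by (auto intro!: map_idI)
  have "inj_on (\<lambda>v. v - (n-k)) (set (take k \<sigma>))" using sd unfolding inj_on_def by auto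
  hence "distinct (map (\<lambda>v. v - (n-k)) (take k \<sigma>))"
    using d(1) by (simp add: distinct_map)
  moreover have "set (map (\<lambda>v. v - (n-k)) (take k \<sigma>)) = {1..k}" using sd img_minus[of "n-k" "n-k+1" n] k by (simp only: set_map) simp
  moreover have "avoids (map (\<lambda>v. v - (n-k)) (take k \<sigma>)) p" if "p = P2413 \<or> p = P3142" for p
  proof -
    have "avoids (take k \<sigma>) p" using avoid_parts(1)[OF av[OF that]] .
    thus ?thesis using m contains_map[of "\<lambda>v. v + (n-k)" "map (\<lambda>v. v - (n-k)) (take k \<sigma>)" p]
      unfolding avoids_def by simp
  qed
  ultimately show "map (\<lambda>v. v - (n-k)) (take k \<sigma>) \<in> sep_perms k" by (simp add: sep_iff)
qed

definition sumdec :: "nat list \<Rightarrow> bool" where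
  "sumdec xs \<longleftrightarrow> (\<exists>k. 0 < k \<and> k < length xs \<and> set (take k xs) = {1..k})"
definition skewdec :: "nat list \<Rightarrow> bool" where
  "skewdec xs \<longleftrightarrow> (\<exists>k. 0 < k \<and> k < length xs \<and> set (drop k xs) = {1..length xs - k})"

lemma downset:
  fixes S :: "nat set"
  assumes "S \<subseteq> {1..k}" "\<forall>s\<in>S. \<forall>t\<in>{1..k}. t \<notin> S \<longrightarrow> s < t"
  shows "S = {1..card S}"
proof (cases "S = {}")
  case True thus ?thesis by simp
next
  case False
  have fin: "finite S" using assms(1) finite_subset by blast
  define M where "M = Max S"
  have MS: "M \<in> S" using Max_in[OF fin False] M_def by simp
  have "S = {1..M}"
  proof
    show "S \<subseteq> {1..M}" using assms(1) Max_ge[OF fin] M_def by auto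
    show "{1..M} \<subseteq> S"
    proof
      fix t assume t: "t \<in> {1..M}"
      have "M \<le> k" using MS assms(1) by auto
      hence "t \<in> {1..k}" using t by auto
      thus "t \<in> S" using assms(2) MS t by force
    qed
  qed
  thus ?thesis by simp
qed

lemma nth_in_take: "i < k \<Longrightarrow> i < length xs \<Longrightarrow> xs ! i \<in> set (take k xs)"
  using nth_mem[of i "take k xs"] by simp

lemma nth_in_drop: "k \<le> i \<Longrightarrow> i < length xs \<Longrightarrow> xs ! i \<in> set (drop k xs)"
  using nth_mem[of "i - k" "drop k xs"] by simp

lemma sep_1: "sep_perms 1 = {[1]}"
proof
  show "sep_perms 1 \<subseteq> {[1]}"
  proof
    fix xs assume xs: "xs \<in> sep_perms 1"
    hence "length xs = 1" by (rule sep_len)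
    then obtain x where "xs = [x]" by (metis One_nat_def length_0_conv length_Suc_conv)
    thus "xs \<in> {[1]}" using xs by (simp add: sep_iff)
  qed
  have "avoids [1] p" if "length p = 4" for p
    using contains_len[of "[1]" p] that unfolding avoids_def by auto
  thus "{[1]} \<subseteq> sep_perms 1" by (simp add: sep_iff)
qed

lemma not_both:
  assumes d: "distinct \<sigma>" "set \<sigma> = {1..length \<sigma>}" and s: "sumdec \<sigma>"
  shows "\<not> skewdec \<sigma>"
proof
  assume "skewdec \<sigma>"
  then obtain j where j: "0 < j" "j < length \<sigma>" "set (drop j \<sigma>) = {1..length \<sigma> - j}"
    unfolding skewdec_def by blast
  obtain k where k: "0 < k" "k < length \<sigma>" "set (take k \<sigma>) = {1..k}"
    using s unfolding sumdec_def by blast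
  show False
  proof (cases "k \<le> j")
    case True
    have "1 \<in> set (drop j \<sigma>)" using j by auto
    moreover have "set (drop j \<sigma>) \<subseteq> set (drop k \<sigma>)" using True by (rule set_drop_subset_set_drop)
    ultimately have "1 \<in> set (drop k \<sigma>)" by blast
    moreover have "1 \<in> set (take k \<sigma>)" using k by auto
    ultimately show False using take_drop_disj[OF d(1), of k] by blast
  next
    case False
    have "length \<sigma> \<in> set \<sigma>" using d(2) j by auto
    moreover have "length \<sigma> \<notin> set (take k \<sigma>)" using k by auto
    moreover have "length \<sigma> \<notin> set (drop j \<sigma>)" using j by auto
    moreover have "set (take j \<sigma>) \<subseteq> set (take k \<sigma>)" using False set_take_subset_set_take[of j k \<sigma>] by simp
    ultimately show False using take_drop_un[of j \<sigma>] by blast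
  qed
qed

lemma struct_thm: "\<sigma> \<in> sep_perms n \<Longrightarrow> 2 \<le> n \<Longrightarrow> sumdec \<sigma> \<or> skewdec \<sigma>"
proof (induction n arbitrary: \<sigma>)
  case 0 thus ?case by simp
next
  case (Suc n)
  let ?N = "Suc n"
  have sd: "distinct \<sigma>" "set \<sigma> = {1..?N}" "avoids \<sigma> P2413" "avoids \<sigma> P3142"
    using Suc.prems(1) by (auto simp: sep_iff)
  have lenS: "length \<sigma> = ?N" using sep_len[OF Suc.prems(1)] .
  have "?N \<in> set \<sigma>" using sd(2) by auto
  then obtain ys zs where \<sigma>: "\<sigma> = ys @ ?N # zs" by (meson split_list)
  let ?s = "ys @ zs"
  have d': "distinct ?s" using sd(1) \<sigma> by auto
  have Nn: "?N \<notin> set ys" "?N \<notin> set zs" using sd(1) \<sigma> by auto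
  have set': "set ?s = {1..n}"
  proof -
    have "set ?s = set \<sigma> - {?N}" using \<sigma> Nn by auto
    thus ?thesis using sd(2) by auto
  qed
  have av': "avoids ?s p" if "avoids \<sigma> p" for p
    using that contains_insert \<sigma> unfolding avoids_def by blast
  have s': "?s \<in> sep_perms n" using d' set' av' sd by (simp add: sep_iff)
  have len': "length ys + length zs = n" using sep_len[OF s'] by simp
  let ?m = "length ys"
  have nth1: "\<sigma> ! i = ys ! i" if "i < ?m" for i using that \<sigma> by (simp add: nth_append)
  have nth2: "\<sigma> ! ?m = ?N" using \<sigma> by simp
  have nth3: "\<sigma> ! (?m + 1 + j) = zs ! j" for j using \<sigma> by (simp add: nth_append)
  show ?case
  proof (cases "n = 1")
    case True
    hence "?s = [1]" using s' sep_1 by auto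
    hence "(ys = [] \<and> zs = [1]) \<or> (ys = [1] \<and> zs = [])" by (cases ys) auto
    thus ?thesis
    proof
      assume "ys = [] \<and> zs = [1]"
      hence "\<sigma> = [2,1]" using \<sigma> True by simp
      hence "skewdec \<sigma>" unfolding skewdec_def by (intro exI[of _ 1]) auto
      thus ?thesis ..
    next
      assume "ys = [1] \<and> zs = []"
      hence "\<sigma> = [1,2]" using \<sigma> True by simp
      hence "sumdec \<sigma>" unfolding sumdec_def by (intro exI[of _ 1]) auto
      thus ?thesis ..
    qed
  next
    case False
    hence n2: "2 \<le> n" using Suc.prems(2) by simp
    from Suc.IH[OF s' n2] show ?thesis
    proof
      assume "sumdec ?s"
      then obtain k where k: "0 < k" "k < n" "set (take k ?s) = {1..k}"
        unfolding sumdec_def using sep_len[OF s'] by auto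
      show ?thesis
      proof (cases "k \<le> ?m")
        case True
        hence "take k \<sigma> = take k ?s" using \<sigma> by simp
        hence "sumdec \<sigma>" unfolding sumdec_def using k lenS by (intro exI[of _ k]) auto
        thus ?thesis ..
      next
        case km: False
        show ?thesis
        proof (cases "?m = 0")
          case True
          hence "\<sigma> = ?N # zs" "zs = ?s" using \<sigma> by auto
          hence "skewdec \<sigma>" unfolding skewdec_def using set' n2 lenS
            by (intro exI[of _ 1]) auto
          thus ?thesis ..
        next
          case m0: False
          define A2 where "A2 = take (k - ?m) zs"
          have tk: "take k ?s = ys @ A2" using km by (simp add: A2_def)
          have yA: "set ys \<union> set A2 = {1..k}" using k(3) unfolding tk by simp
          show ?thesis
          proof (cases "\<forall>a\<in>set ys. \<forall>b\<in>set A2. a < b")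
            case True
            have "set ys = {1..card (set ys)}"
            proof (rule downset)
              show "set ys \<subseteq> {1..k}" using yA by auto
              show "\<forall>s\<in>set ys. \<forall>t\<in>{1..k}. t \<notin> set ys \<longrightarrow> s < t"
                using True yA by auto
            qed
            hence "set ys = {1..?m}" using d' by (simp add: distinct_card)
            moreover have "take ?m \<sigma> = ys" using \<sigma> by simp
            ultimately have "sumdec \<sigma>" unfolding sumdec_def using m0 lenS len'
              by (intro exI[of _ ?m]) auto
            thus ?thesis ..
          next
            case False
            then obtain a b where ab: "a \<in> set ys" "b \<in> set A2" "\<not> a < b" by blast
            have bz: "b \<in> set zs" using ab(2) A2_def by (meson in_set_takeD)
            have "a \<noteq> b" using d' ab(1) bz by auto
            hence ba: "b < a" using ab(3) by simp
            obtain i1 where i1: "i1 < ?m" "ys ! i1 = a" using ab(1) by (meson in_set_conv_nth)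
            obtain j2 where j2: "j2 < length A2" "A2 ! j2 = b" using ab(2) by (meson in_set_conv_nth)
            have j2': "j2 < k - ?m" "zs ! j2 = b" using j2 by (auto simp: A2_def)
            have kz: "k - ?m < length zs" using k(2) km len' by simp
            define c where "c = zs ! (k - ?m)"
            have "c = ?s ! k" using c_def km by (simp add: nth_append)
            hence "c \<in> set (drop k ?s)" using nth_in_drop[of k k ?s] k(2) len' by simp
            moreover have "set (drop k ?s) = {1..n} - {1..k}" by (simp only: set_drop_diff[OF d'] set' k(3))
            ultimately have "c \<in> {1..n} - {1..k}" by blast
            moreover have "a \<in> {1..k}" using ab(1) yA by auto
            ultimately have ac: "a < c" "c < ?N" by auto
            have "contains_pattern \<sigma> P2413"
            proof (rule has2413[of i1 ?m "?m + 1 + j2" "?m + 1 + (k - ?m)"])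
              show "i1 < ?m" by (rule i1(1))
              show "?m < ?m + 1 + j2" by simp
              show "?m + 1 + j2 < ?m + 1 + (k - ?m)" using j2' by simp
              show "?m + 1 + (k - ?m) < length \<sigma>" using kz \<sigma> by simp
              show "\<sigma> ! (?m + 1 + j2) < \<sigma> ! i1" using nth1 nth3 i1 j2' ba by simp
              show "\<sigma> ! i1 < \<sigma> ! (?m + 1 + (k - ?m))" using nth1 nth3 i1 ac c_def by simp
              show "\<sigma> ! (?m + 1 + (k - ?m)) < \<sigma> ! ?m" using nth2 nth3 ac c_def by simp
            qed
            thus ?thesis using sd(3) unfolding avoids_def by blast
          qed
        qed
      qed
    next
      assume "skewdec ?s"
      then obtain k where k: "0 < k" "k < n" "set (drop k ?s) = {1..n - k}"
        unfolding skewdec_def using sep_len[OF s'] by auto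
      have TT: "set (take k ?s) = {1..n} - {1..n-k}" by (simp only: set_take_diff[OF d'] set' k(3))
      show ?thesis
      proof (cases "?m \<le> k")
        case True
        have "drop (k + 1) \<sigma> = drop (k - ?m) zs" using \<sigma> True by (simp add: Suc_diff_le)
        moreover have "drop k ?s = drop (k - ?m) zs" using True by simp
        ultimately have "set (drop (k+1) \<sigma>) = {1..?N - (k+1)}" using k(3) by simp
        hence "skewdec \<sigma>" unfolding skewdec_def using k lenS by (intro exI[of _ "k+1"]) auto
        thus ?thesis ..
      next
        case km: False
        show ?thesis
        proof (cases "zs = []")
          case True
          hence "take n \<sigma> = ?s" using \<sigma> len' by simp
          hence "sumdec \<sigma>" unfolding sumdec_def using set' lenS n2 by (intro exI[of _ n]) auto
          thus ?thesis ..
        next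
          case zne: False
          show ?thesis
          proof (cases "\<forall>y\<in>set ys. \<forall>z\<in>set zs. z < y")
            case True
            have "set zs = {1..card (set zs)}"
            proof (rule downset)
              show "set zs \<subseteq> {1..n}" using set' by auto
              show "\<forall>s\<in>set zs. \<forall>t\<in>{1..n}. t \<notin> set zs \<longrightarrow> s < t"
                using True set' by auto
            qed
            hence sz: "set zs = {1..length zs}" using d' by (simp add: distinct_card)
            have dz: "drop (?m + 1) \<sigma> = zs" using \<sigma> by simp
            have lz: "length zs = length \<sigma> - (?m + 1)" using lenS len' by simp
            have "?m + 1 < length \<sigma>" using zne lenS len' by (cases zs) auto
            moreover have "set (drop (?m + 1) \<sigma>) = {1..length \<sigma> - (?m + 1)}"
              unfolding dz using sz lz by simp
            ultimately have "skewdec \<sigma>" unfolding skewdec_def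
              by (intro exI[of _ "?m + 1"]) simp
            thus ?thesis ..
          next
            case False
            then obtain y z where yz: "y \<in> set ys" "z \<in> set zs" "\<not> z < y" by blast
            have "y \<noteq> z" using d' yz by auto
            hence yz': "y < z" using yz(3) by simp
            obtain i2 where i2: "i2 < ?m" "ys ! i2 = y" using yz(1) by (meson in_set_conv_nth)
            obtain j where j: "j < length zs" "zs ! j = z" using yz(2) by (meson in_set_conv_nth)
            have dk: "drop k ?s = drop k ys @ zs" using km by simp
            have zlow: "z \<le> n - k" using k(3) dk yz(2) by auto
            have sy: "?s ! i2 = y" using i2 by (simp add: nth_append)
            have ik: "k \<le> i2"
            proof (rule ccontr)
              assume "\<not> k \<le> i2"
              hence "y \<in> set (take k ?s)" using nth_in_take[of i2 k ?s] sy i2 by simp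
              hence "y \<in> {1..n} - {1..n-k}" using TT by blast
              thus False using zlow yz' by auto
            qed
            have "y \<in> set (drop k ?s)" using nth_in_drop[of k i2 ?s] sy i2 ik by simp
            hence "y \<in> {1..n - k}" using k(3) by blast
            hence ylow: "y \<le> n - k" by simp
            define a where "a = ys ! 0"
            have m0: "0 < ?m" using km by linarith
            have "a = ?s ! 0" using m0 a_def by (simp add: nth_append)
            moreover have "0 < length ?s" using m0 by simp
            ultimately have "a \<in> set (take k ?s)" using nth_in_take[of 0 k ?s] k(1) by simp
            hence "a \<in> {1..n} - {1..n-k}" using TT by blast
            hence az: "z < a" "a < ?N" using zlow by auto
            have "contains_pattern \<sigma> P3142"
            proof (rule has3142[of 0 i2 ?m "?m + 1 + j"])
              show "0 < i2" using ik k by simp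
              show "i2 < ?m" by (rule i2(1))
              show "?m < ?m + 1 + j" by simp
              show "?m + 1 + j < length \<sigma>" using j \<sigma> by simp
              show "\<sigma> ! i2 < \<sigma> ! (?m + 1 + j)" using nth1 nth3 i2 j yz' by simp
              show "\<sigma> ! (?m + 1 + j) < \<sigma> ! 0" using nth1[OF m0] nth3 j az a_def by simp
              show "\<sigma> ! 0 < \<sigma> ! ?m" using nth1[OF m0] nth2 az a_def by simp
            qed
            thus ?thesis using sd(4) unfolding avoids_def by blast
          qed
        qed
      qed
    qed
  qed
qed

definition pc :: "nat \<Rightarrow> nat \<Rightarrow> nat" where
  "pc n l = (if 1 \<le> l \<and> l \<le> n then card {xs \<in> sep_perms_at n l. \<not> sumdec xs} else 0)"
definition qc :: "nat \<Rightarrow> nat \<Rightarrow> nat" where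
  "qc n l = (if 1 \<le> l \<and> l \<le> n then card {xs \<in> sep_perms_at n l. \<not> skewdec xs} else 0)"
definition ac :: "nat \<Rightarrow> nat \<Rightarrow> nat" where
  "ac n l = (if 1 \<le> l \<and> l \<le> n then card (sep_perms_at n l) else 0)"

lemma at_finite: "finite (sep_perms_at n l)"
  using sep_finite[of n] unfolding sep_perms_at_def by simp

lemma comb3: "pc n l + qc n l = ac n l + (if n = 1 \<and> l = 1 then 1 else 0)"
proof (cases "1 \<le> l \<and> l \<le> n")
  case False thus ?thesis by (auto simp: pc_def qc_def ac_def)
next
  case True
  let ?A = "sep_perms_at n l"
  let ?P = "{xs \<in> ?A. \<not> sumdec xs}" and ?Q = "{xs \<in> ?A. \<not> skewdec xs}"
  have fP: "finite ?P" using at_finite[of n l] by simp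
  have fQ: "finite ?Q" using at_finite[of n l] by simp
  have "card ?P + card ?Q = card (?P \<union> ?Q) + card (?P \<inter> ?Q)"
    by (rule card_Un_Int[OF fP fQ])
  moreover have "?P \<union> ?Q = ?A"
  proof -
    have "\<not> sumdec xs \<or> \<not> skewdec xs" if "xs \<in> ?A" for xs
    proof -
      have xs: "xs \<in> sep_perms n" using that by (simp add: sep_perms_at_def)
      hence "distinct xs" "set xs = {1..length xs}" using sep_len[OF xs] by (auto simp: sep_iff)
      thus ?thesis using not_both by blast
    qed
    thus ?thesis by blast
  qed
  moreover have "card (?P \<inter> ?Q) = (if n = 1 \<and> l = 1 then 1 else 0)"
  proof (cases "n = 1")
    case True
    hence l1: "l = 1" using \<open>1 \<le> l \<and> l \<le> n\<close> by simp
    have "?A = {[1]}" unfolding sep_perms_at_def True l1 sep_1 by auto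
    moreover have "\<not> sumdec [1]" "\<not> skewdec [1]" by (auto simp: sumdec_def skewdec_def)
    ultimately have "?P \<inter> ?Q = {[1]}" by auto
    thus ?thesis using True l1 by simp
  next
    case False
    hence n2: "2 \<le> n" using \<open>1 \<le> l \<and> l \<le> n\<close> by simp
    have "sumdec xs \<or> skewdec xs" if "xs \<in> ?A" for xs
      using struct_thm[of xs n] that n2 by (simp add: sep_perms_at_def)
    hence "?P \<inter> ?Q = {}" by blast
    thus ?thesis using False by simp
  qed
  ultimately show ?thesis using True by (simp add: pc_def qc_def ac_def)
qed

lemma take_of_app: "\<alpha> @ X = \<alpha>' @ Y \<Longrightarrow> length \<alpha> < length \<alpha>' \<Longrightarrow> take (length \<alpha>) \<alpha>' = \<alpha>"
proof -
  assume e: "\<alpha> @ X = \<alpha>' @ Y" and l: "length \<alpha> < length \<alpha>'"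
  have "take (length \<alpha>) (\<alpha> @ X) = \<alpha>" by simp
  moreover have "take (length \<alpha>) (\<alpha>' @ Y) = take (length \<alpha>) \<alpha>'" using l by simp
  ultimately show ?thesis using e by simp
qed

lemma drop_of_app: "P @ \<beta> = P' @ \<beta>' \<Longrightarrow> length P < length P' \<Longrightarrow> drop (length P' - length P) \<beta> = \<beta>'"
proof -
  assume e: "P @ \<beta> = P' @ \<beta>'" and l: "length P < length P'"
  have "drop (length P') (P' @ \<beta>') = \<beta>'" by simp
  moreover have "drop (length P') (P @ \<beta>) = drop (length P' - length P) \<beta>" using l by simp
  ultimately show ?thesis using e by simp
qed

lemma one_pos:
  assumes "\<sigma> \<in> sep_perms n" "\<sigma> ! p = 1" "p < n" "j < n" "\<sigma> ! j = 1"
  shows "j = p"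
proof -
  have "distinct \<sigma>" "length \<sigma> = n" using assms(1) sep_len by (auto simp: sep_iff)
  thus ?thesis using assms nth_eq_iff_index_eq by metis
qed

lemma comb1: "ac n l = (\<Sum>i=0..n. pc i l * card (sep_perms (n - i)))"
proof (cases "1 \<le> l \<and> l \<le> n")
  case False
  hence "pc i l = 0" if "i \<le> n" for i using that by (auto simp: pc_def)
  thus ?thesis using False by (auto simp: ac_def)
next
  case True
  define P where "P i = {xs \<in> sep_perms_at i l. \<not> sumdec xs}" for i
  define D where "D = Sigma {l..n} (\<lambda>i. P i \<times> sep_perms (n - i))"
  define F where "F = (\<lambda>(i::nat, \<alpha>::nat list, \<tau>::nat list). \<alpha> @ map (\<lambda>v. v + i) \<tau>)"
  have into: "F x \<in> sep_perms_at n l" if "x \<in> D" for x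
  proof -
    obtain i \<alpha> \<tau> where x: "x = (i, \<alpha>, \<tau>)" by (cases x) auto
    have h: "l \<le> i" "i \<le> n" "\<alpha> \<in> sep_perms i" "\<alpha> ! (l - 1) = 1" "\<tau> \<in> sep_perms (n - i)"
      using that x by (auto simp: D_def P_def sep_perms_at_def)
    have "F x \<in> sep_perms (i + (n - i))" unfolding x F_def using sum_perm[OF h(3) h(5)] by simp
    moreover have li: "l - 1 < length \<alpha>" using h(1) True sep_len[OF h(3)] by auto
    hence "F x ! (l - 1) = 1" unfolding x F_def using h(4) by (simp add: nth_append)
    ultimately show ?thesis using h by (simp add: sep_perms_at_def)
  qed
  have onto: "\<sigma> \<in> F ` D" if s: "\<sigma> \<in> sep_perms_at n l" for \<sigma>
  proof -
    have s1: "\<sigma> \<in> sep_perms n" "\<sigma> ! (l - 1) = 1" using s by (auto simp: sep_perms_at_def)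
    have len: "length \<sigma> = n" using sep_len[OF s1(1)] .
    define K where "K = {k \<in> {1..n}. set (take k \<sigma>) = {1..k}}"
    have nK: "n \<in> K" using True len s1(1) by (auto simp: K_def sep_iff)
    have fK: "finite K" by (simp add: K_def)
    define i where "i = Min K"
    have iK: "i \<in> K" using Min_in[OF fK] nK i_def by auto
    have imin: "i \<le> k" if "k \<in> K" for k using Min_le[OF fK that] i_def by simp
    have i1: "1 \<le> i" "i \<le> n" "set (take i \<sigma>) = {1..i}" using iK by (auto simp: K_def)
    have "1 \<in> set (take i \<sigma>)" using i1 by simp
    then obtain j where j: "j < length (take i \<sigma>)" "take i \<sigma> ! j = 1" by (meson in_set_conv_nth)
    have ln: "l - 1 < n" using True by auto
    have "j < n" "\<sigma> ! j = 1" using j len i1 by auto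
    hence "j = l - 1" using one_pos[OF s1(1) s1(2) ln] by blast
    hence "l - 1 < i" using j by simp
    hence li: "l \<le> i" using True by arith
    let ?\<alpha> = "take i \<sigma>" and ?\<tau> = "map (\<lambda>v. v - i) (drop i \<sigma>)"
    have sp: "?\<alpha> \<in> sep_perms i" "?\<tau> \<in> sep_perms (n - i)" "map (\<lambda>v. v + i) ?\<tau> = drop i \<sigma>"
      using sum_split[OF s1(1) i1(3) i1(2)] by auto
    have "?\<alpha> ! (l - 1) = 1" using s1(2) \<open>l - 1 < i\<close> by simp
    moreover have "\<not> sumdec ?\<alpha>"
    proof
      assume "sumdec ?\<alpha>"
      then obtain k where k: "0 < k" "k < length ?\<alpha>" "set (take k ?\<alpha>) = {1..k}"
        unfolding sumdec_def by blast
      have "k < i" using k(2) by simp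
      moreover have "k \<in> K" using k i1 \<open>k < i\<close> by (auto simp: K_def min_def)
      ultimately show False using imin by fastforce
    qed
    ultimately have inD: "(i, ?\<alpha>, ?\<tau>) \<in> D" using li i1 sp by (simp add: D_def P_def sep_perms_at_def)
    have Fe: "F (i, ?\<alpha>, ?\<tau>) = \<sigma>" unfolding F_def using sp(3) by simp
    show ?thesis by (rule rev_image_eqI[of "(i, ?\<alpha>, ?\<tau>)" D \<sigma> F, OF inD Fe[symmetric]])
  qed
  have inj: "inj_on F D"
  proof (rule inj_onI)
    fix x y assume xD: "x \<in> D" and yD: "y \<in> D" and e: "F x = F y"
    obtain i \<alpha> \<tau> where x: "x = (i, \<alpha>, \<tau>)" by (cases x) auto
    obtain i' \<alpha>' \<tau>' where y: "y = (i', \<alpha>', \<tau>')" by (cases y) auto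
    have h: "l \<le> i" "\<alpha> \<in> sep_perms i" "\<not> sumdec \<alpha>"
      using xD x by (auto simp: D_def P_def sep_perms_at_def)
    have h': "l \<le> i'" "\<alpha>' \<in> sep_perms i'" "\<not> sumdec \<alpha>'"
      using yD y by (auto simp: D_def P_def sep_perms_at_def)
    have e': "\<alpha> @ map (\<lambda>v. v + i) \<tau> = \<alpha>' @ map (\<lambda>v. v + i') \<tau>'" using e x y by (simp add: F_def)
    have L: "length \<alpha> = i" "length \<alpha>' = i'" using sep_len h(2) h'(2) by auto
    have S: "set \<alpha> = {1..i}" "set \<alpha>' = {1..i'}" using h(2) h'(2) by (auto simp: sep_iff)
    have ii: "i = i'"
    proof (rule ccontr)
      assume "i \<noteq> i'"
      hence "i < i' \<or> i' < i" by arith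
      thus False
      proof
        assume "i < i'"
        hence "take i \<alpha>' = \<alpha>" using take_of_app[OF e'] L by simp
        hence "sumdec \<alpha>'" unfolding sumdec_def using \<open>i < i'\<close> L h(1) True S(1)
          by (intro exI[of _ i]) auto
        thus False using h' by simp
      next
        assume "i' < i"
        hence "take i' \<alpha> = \<alpha>'" using take_of_app[OF e'[symmetric]] L by simp
        hence "sumdec \<alpha>" unfolding sumdec_def using \<open>i' < i\<close> L h'(1) True S(2)
          by (intro exI[of _ i']) auto
        thus False using h by simp
      qed
    qed
    have "\<alpha> = \<alpha>'" using e' L ii by (metis append_eq_append_conv)
    moreover have "map (\<lambda>v. v + i) \<tau> = map (\<lambda>v. v + i) \<tau>'" using e' \<open>\<alpha> = \<alpha>'\<close> ii by simp
    hence "\<tau> = \<tau>'" by (simp add: inj_map_eq_map inj_on_def)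
    ultimately show "x = y" using x y ii by simp
  qed
  have bij: "bij_betw F D (sep_perms_at n l)"
    unfolding bij_betw_def using inj into onto by blast
  have finP: "finite (P i)" for i using at_finite[of i l] by (simp add: P_def)
  have "card (sep_perms_at n l) = card D" using bij_betw_same_card[OF bij] by simp
  also have "\<dots> = (\<Sum>i\<in>{l..n}. card (P i) * card (sep_perms (n - i)))"
    unfolding D_def by (subst card_SigmaI) (auto simp: finP sep_finite card_cartesian_product)
  also have "\<dots> = (\<Sum>i=0..n. pc i l * card (sep_perms (n - i)))"
  proof (rule sum.mono_neutral_cong_right[symmetric])
    show "finite {0..n}" by simp
    show "{l..n} \<subseteq> {0..n}" by auto
    show "\<forall>i\<in>{0..n} - {l..n}. pc i l * card (sep_perms (n - i)) = 0" by (auto simp: pc_def)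
    show "\<And>i. i \<in> {l..n} \<Longrightarrow> pc i l * card (sep_perms (n - i)) = card (P i) * card (sep_perms (n - i))"
      using True by (auto simp: pc_def P_def)
  qed
  finally show ?thesis using True by (simp add: ac_def)
qed

lemma comb2: "ac n l = (\<Sum>i=0..n. card (sep_perms (n - i)) * (if n - i \<le> l then qc i (l - (n - i)) else 0))"
proof (cases "1 \<le> l \<and> l \<le> n")
  case False
  have "(if n - i \<le> l then qc i (l - (n - i)) else 0) = 0" if "i \<le> n" for i
    using that False by (auto simp: qc_def)
  thus ?thesis using False by (auto simp: ac_def)
next
  case True
  define Qs where "Qs i = {xs \<in> sep_perms_at i (l - (n - i)). \<not> skewdec xs}" for i
  define D where "D = Sigma {n+1-l..n} (\<lambda>i. Qs i \<times> sep_perms (n - i))"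
  define F where "F = (\<lambda>(i::nat, \<beta>::nat list, \<tau>::nat list). map (\<lambda>v. v + i) \<tau> @ \<beta>)"
  have into: "F x \<in> sep_perms_at n l" if "x \<in> D" for x
  proof -
    obtain i \<beta> \<tau> where x: "x = (i, \<beta>, \<tau>)" by (cases x) auto
    have h: "n+1-l \<le> i" "i \<le> n" "\<beta> \<in> sep_perms i" "\<beta> ! (l - (n - i) - 1) = 1" "\<tau> \<in> sep_perms (n - i)"
      using that x by (auto simp: D_def Qs_def sep_perms_at_def)
    have "F x \<in> sep_perms ((n - i) + i)" unfolding x F_def using skew_perm[OF h(3) h(5)] by simp
    hence "F x \<in> sep_perms n" using h(2) by simp
    moreover have le: "n - i \<le> l - 1" using h(1) True by arith
    have "l - 1 - (n - i) = l - (n - i) - 1" by arith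
    hence "F x ! (l - 1) = 1" unfolding x F_def using h(4) le sep_len[OF h(5)] by (simp add: nth_append)
    ultimately show ?thesis by (simp add: sep_perms_at_def)
  qed
  have onto: "\<sigma> \<in> F ` D" if s: "\<sigma> \<in> sep_perms_at n l" for \<sigma>
  proof -
    have s1: "\<sigma> \<in> sep_perms n" "\<sigma> ! (l - 1) = 1" using s by (auto simp: sep_perms_at_def)
    have len: "length \<sigma> = n" using sep_len[OF s1(1)] .
    define K where "K = {k. k < n \<and> set (drop k \<sigma>) = {1..n - k}}"
    have zK: "0 \<in> K" using True s1(1) by (auto simp: K_def sep_iff)
    have fK: "finite K" by (rule finite_subset[of _ "{..<n}"]) (auto simp: K_def)
    define k0 where "k0 = Max K"
    have k0K: "k0 \<in> K" using Max_in[OF fK] zK k0_def by auto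
    have kmax: "k \<le> k0" if "k \<in> K" for k using Max_ge[OF fK that] k0_def by simp
    have k1: "k0 < n" "set (drop k0 \<sigma>) = {1..n - k0}" using k0K by (auto simp: K_def)
    define i where "i = n - k0"
    have ni: "n - i = k0" using k1 i_def by simp
    have i1: "1 \<le> i" "i \<le> n" using k1 i_def by auto
    let ?\<beta> = "drop k0 \<sigma>" and ?\<tau> = "map (\<lambda>v. v - (n - k0)) (take k0 \<sigma>)"
    have sp: "?\<beta> \<in> sep_perms (n - k0)" "?\<tau> \<in> sep_perms k0" "map (\<lambda>v. v + (n - k0)) ?\<tau> = take k0 \<sigma>"
      using skew_split[OF s1(1) k1(2)] k1(1) by auto
    have "1 \<in> set ?\<beta>" using k1 by simp
    then obtain j where j: "j < length ?\<beta>" "?\<beta> ! j = 1" by (meson in_set_conv_nth)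
    have j2: "k0 + j < n" "\<sigma> ! (k0 + j) = 1" using j len by auto
    have ln: "l - 1 < n" using True by auto
    have kj: "k0 + j = l - 1" using one_pos[OF s1(1) s1(2) ln j2] .
    have li: "n + 1 - l \<le> i" using kj True i_def by arith
    have pos: "l - (n - i) - 1 = j" using kj ni by arith
    have "?\<beta> ! (l - (n - i) - 1) = 1" using pos j(2) by simp
    moreover have "\<not> skewdec ?\<beta>"
    proof
      assume "skewdec ?\<beta>"
      then obtain k where k: "0 < k" "k < length ?\<beta>" "set (drop k ?\<beta>) = {1..length ?\<beta> - k}"
        unfolding skewdec_def by blast
      have "drop k ?\<beta> = drop (k0 + k) \<sigma>" by (simp add: add.commute)
      moreover have "length ?\<beta> = n - k0" using len by simp
      ultimately have "set (drop (k0 + k) \<sigma>) = {1..n - (k0 + k)}" using k(3) by simp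
      moreover have "k0 + k < n" using k(2) len by simp
      ultimately have "k0 + k \<in> K" by (simp add: K_def)
      thus False using kmax k(1) by fastforce
    qed
    ultimately have inD: "(i, ?\<beta>, ?\<tau>) \<in> D" using li i1 sp ni i_def
      by (simp add: D_def Qs_def sep_perms_at_def)
    have Fe: "F (i, ?\<beta>, ?\<tau>) = \<sigma>" unfolding F_def using sp(3) i_def by simp
    show ?thesis by (rule rev_image_eqI[of "(i, ?\<beta>, ?\<tau>)" D \<sigma> F, OF inD Fe[symmetric]])
  qed
  have inj: "inj_on F D"
  proof (rule inj_onI)
    fix x y assume xD: "x \<in> D" and yD: "y \<in> D" and e: "F x = F y"
    obtain i \<beta> \<tau> where x: "x = (i, \<beta>, \<tau>)" by (cases x) auto
    obtain i' \<beta>' \<tau>' where y: "y = (i', \<beta>', \<tau>')" by (cases y) auto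
    have h: "n+1-l \<le> i" "i \<le> n" "\<beta> \<in> sep_perms i" "\<not> skewdec \<beta>" "\<tau> \<in> sep_perms (n - i)"
      using xD x by (auto simp: D_def Qs_def sep_perms_at_def)
    have h': "n+1-l \<le> i'" "i' \<le> n" "\<beta>' \<in> sep_perms i'" "\<not> skewdec \<beta>'" "\<tau>' \<in> sep_perms (n - i')"
      using yD y by (auto simp: D_def Qs_def sep_perms_at_def)
    have e': "map (\<lambda>v. v + i) \<tau> @ \<beta> = map (\<lambda>v. v + i') \<tau>' @ \<beta>'" using e x y by (simp add: F_def)
    have L: "length (map (\<lambda>v. v + i) \<tau>) = n - i" "length (map (\<lambda>v. v + i') \<tau>') = n - i'"
      "length \<beta> = i" "length \<beta>' = i'"
      using sep_len h(3,5) h'(3,5) by auto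
    have S: "set \<beta> = {1..i}" "set \<beta>' = {1..i'}" using h(3) h'(3) by (auto simp: sep_iff)
    have ipos: "1 \<le> i" "1 \<le> i'" using h(1) h'(1) True by auto
    have ii: "i = i'"
    proof (rule ccontr)
      assume "i \<noteq> i'"
      hence "i < i' \<or> i' < i" by arith
      thus False
      proof
        assume lt: "i < i'"
        have "n - i' < n - i" using lt h(2) h'(2) by arith
        hence "drop ((n - i) - (n - i')) \<beta>' = \<beta>" using drop_of_app[OF e'[symmetric]] L by simp
        moreover have "(n - i) - (n - i') = i' - i" using lt h'(2) by arith
        ultimately have "set (drop (i' - i) \<beta>') = {1..length \<beta>' - (i' - i)}" using S L lt by simp
        hence "skewdec \<beta>'" unfolding skewdec_def using lt L ipos
          by (intro exI[of _ "i' - i"]) auto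
        thus False using h' by simp
      next
        assume lt: "i' < i"
        have "n - i < n - i'" using lt h(2) h'(2) by arith
        hence "drop ((n - i') - (n - i)) \<beta> = \<beta>'" using drop_of_app[OF e'] L by simp
        moreover have "(n - i') - (n - i) = i - i'" using lt h(2) by arith
        ultimately have "set (drop (i - i') \<beta>) = {1..length \<beta> - (i - i')}" using S L lt by simp
        hence "skewdec \<beta>" unfolding skewdec_def using lt L ipos
          by (intro exI[of _ "i - i'"]) auto
        thus False using h by simp
      qed
    qed
    have "map (\<lambda>v. v + i) \<tau> = map (\<lambda>v. v + i') \<tau>' \<and> \<beta> = \<beta>'"
      using e' L ii by (simp add: append_eq_append_conv)
    hence "\<beta> = \<beta>'" "map (\<lambda>v. v + i) \<tau> = map (\<lambda>v. v + i) \<tau>'" using ii by auto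
    moreover from this(2) have "\<tau> = \<tau>'" by (simp add: inj_map_eq_map inj_on_def)
    ultimately show "x = y" using x y ii by simp
  qed
  have bij: "bij_betw F D (sep_perms_at n l)"
    unfolding bij_betw_def using inj into onto by blast
  have finQ: "finite (Qs i)" for i using at_finite[of i] by (simp add: Qs_def)
  have "card (sep_perms_at n l) = card D" using bij_betw_same_card[OF bij] by simp
  also have "\<dots> = (\<Sum>i\<in>{n+1-l..n}. card (Qs i) * card (sep_perms (n - i)))"
    unfolding D_def by (subst card_SigmaI) (auto simp: finQ sep_finite card_cartesian_product)
  also have "\<dots> = (\<Sum>i=0..n. card (sep_perms (n - i)) * (if n - i \<le> l then qc i (l - (n - i)) else 0))"
  proof (rule sum.mono_neutral_cong_right[symmetric])
    show "finite {0..n}" by simp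
    show "{n+1-l..n} \<subseteq> {0..n}" by auto
    show "\<forall>i\<in>{0..n} - {n+1-l..n}. card (sep_perms (n - i)) * (if n - i \<le> l then qc i (l - (n - i)) else 0) = 0"
    proof
      fix i assume "i \<in> {0..n} - {n+1-l..n}"
      hence "l \<le> n - i" using True by auto
      thus "card (sep_perms (n - i)) * (if n - i \<le> l then qc i (l - (n - i)) else 0) = 0"
        by (auto simp: qc_def)
    qed
    show "card (sep_perms (n - i)) * (if n - i \<le> l then qc i (l - (n - i)) else 0) = card (Qs i) * card (sep_perms (n - i))"
      if "i \<in> {n+1-l..n}" for i
    proof -
      have "n - i \<le> l" "1 \<le> l - (n - i)" "l - (n - i) \<le> i" using that True by auto
      thus ?thesis by (simp add: qc_def Qs_def)
    qed
  qed
  finally show ?thesis using True by (simp add: ac_def)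
qed

definition Gp :: "rat fps fps" where "Gp = Abs_fps (\<lambda>n. Abs_fps (\<lambda>l. of_nat (pc n l)))"
definition Gm :: "rat fps fps" where "Gm = Abs_fps (\<lambda>n. Abs_fps (\<lambda>l. of_nat (qc n l)))"

lemma sep_perms_0: "sep_perms 0 = {[]}"
  by (auto simp: sep_perms_def avoids_def contains_pattern_def)


lemma g_alt: "g_sep = Abs_fps (\<lambda>n. Abs_fps (\<lambda>l. of_nat (ac n l)))"
  unfolding g_sep_def ac_def by (intro fps_ext) auto

lemma Sx_nth: "Sx $ n = fps_const (of_nat (card (sep_perms n)))"
  by (simp add: Sx_def sep_perms_0)
lemma Sxu_nth: "Sxu $ n = fps_const (of_nat (card (sep_perms n))) * fps_X ^ n"
  by (simp add: Sxu_def sep_perms_0)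

lemma eq1: "g_sep = Gp * Sx"
proof (rule fps_ext)
  fix n show "g_sep $ n = (Gp * Sx) $ n"
  proof (rule fps_ext)
    fix l
    have "(Gp * Sx) $ n $ l = (\<Sum>i=0..n. of_nat (pc i l * card (sep_perms (n - i))))"
      by (simp only: fps_mult_nth[of Gp Sx n] fps_sum_nth) (simp add: Sx_nth Gp_def)
    also have "\<dots> = of_nat (ac n l)" by (simp only: comb1 of_nat_sum)
    finally show "g_sep $ n $ l = (Gp * Sx) $ n $ l" by (simp add: g_alt)
  qed
qed

lemma eq2: "g_sep = Gm * Sxu"
proof (rule fps_ext)
  fix n show "g_sep $ n = (Gm * Sxu) $ n"
  proof (rule fps_ext)
    fix l
    have "(Gm * Sxu) $ n $ l = (\<Sum>i=0..n. of_nat (card (sep_perms (n - i)) * (if n - i \<le> l then qc i (l - (n - i)) else 0)))"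
      by (simp only: fps_mult_nth[of Gm Sxu n] fps_sum_nth Sxu_nth mult.assoc[symmetric] fps_X_power_mult_right_nth)
         (auto simp add: Gm_def intro!: sum.cong)
    also have "\<dots> = of_nat (ac n l)" by (simp only: comb2 of_nat_sum)
    finally show "g_sep $ n $ l = (Gm * Sxu) $ n $ l" by (simp add: g_alt)
  qed
qed

lemma eq3: "Gp + Gm = g_sep + fps_X * fps_const fps_X"
proof (rule fps_ext)
  fix n show "(Gp + Gm) $ n = (g_sep + fps_X * fps_const fps_X) $ n"
  proof (rule fps_ext)
    fix l
    have "of_nat (pc n l) + of_nat (qc n l) = (of_nat (ac n l + (if n = 1 \<and> l = 1 then 1 else 0)) :: rat)"
      by (simp only: comb3[symmetric] of_nat_add)
    then show "(Gp + Gm) $ n $ l = (g_sep + fps_X * fps_const fps_X) $ n $ l"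
      by (cases n) (auto simp: Gp_def Gm_def g_alt fps_X_def)
  qed
qed

theorem proposition2p1:
  shows "g_sep = fps_X * fps_const fps_X * Sx * Sxu * inverse (Sx + Sxu - Sx * Sxu)"
proof -
  define D where "D = Sx + Sxu - Sx * Sxu"
  have D0: "D $ 0 = 1" by (simp add: D_def Sx_nth Sxu_nth sep_perms_0)
  have i1: "inverse (1::rat fps) = 1" using fps_const_inverse[of "1::rat"] by simp
  have "inverse D = fps_right_inverse D (inverse (D $ 0))" by (simp only: fps_inverse_def)
  hence "inverse D = fps_right_inverse D 1" by (simp only: D0 i1)
  hence DI: "D * inverse D = 1" using fps_right_inverse[of D 1] D0 by simp
  have "g_sep * D = fps_X * fps_const fps_X * Sx * Sxu"
  proof -
    have "(g_sep + fps_X * fps_const fps_X) * Sx * Sxu = Gp * Sx * Sxu + Gm * Sxu * Sx"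
      by (simp add: eq3[symmetric] algebra_simps)
    also have "\<dots> = g_sep * Sxu + g_sep * Sx" by (simp add: eq1[symmetric] eq2[symmetric])
    finally show ?thesis unfolding D_def by (simp add: algebra_simps)
  qed
  hence "g_sep * D * inverse D = fps_X * fps_const fps_X * Sx * Sxu * inverse D" by simp
  moreover have "g_sep * D * inverse D = g_sep" using DI by (simp only: mult.assoc mult_1_right)
  ultimately show ?thesis by (simp only: D_def)
qed

end
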